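(* Let $Q$ be a quiver, $C\subseteq\Bbbk Q$ a subcoalgebra, and $I$ a finitely generated right coideal of $C$. There exists a right coideal $I'\subseteq C$ containing $I$ and generated by a finite independent set of multipaths in $C$.
   Context: $\Bbbk$ is a field. The path coalgebra $\Bbbk Q$ has basis all paths of $Q$ (including trivial paths, identified with vertices), with $\Delta(p)=\sum_{xy=p}x\otimes y$ ($xy$ = concatenation) and $\varepsilon(p)=1$ if $p$ is trivial, $0$ otherwise. A right coideal of $C$ is a subspace $I$ with $\Delta(I)\subseteq I\otimes C$; for $x\in C$, $\langle x\rangle^C$ is the smallest right coideal of $C$ containing $x$, and a right coideal is generated by a set if it is the smallest right coideal containing it. A multipath is a nonzero linear combination of paths all sharing the same source and the same target; $M(C)$ is the set of multipaths in $C$. A subset $F\subseteq M(C)$ is independent if it is linearly independent and $\langle x\rangle^C\cap F=\{x\}$ for each $x\in F$. *)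

theory Defs
  imports Main
begin

text \<open>A quiver is given by a vertex type 'v, an arrow type 'a and source/target maps
  src, tgt :: 'a \<Rightarrow> 'v. A path is a pair (v, as) of a starting vertex and a list
  of arrows; (v, []) is the trivial path at v.\<close>

type_synonym ('v,'a) qpath = "'v \<times> 'a list"

definition valid_path :: "('a \<Rightarrow> 'v) \<Rightarrow> ('a \<Rightarrow> 'v) \<Rightarrow> ('v,'a) qpath \<Rightarrow> bool" where
  "valid_path src tgt p = (case snd p of [] \<Rightarrow> True
     | a # _ \<Rightarrow> src a = fst p \<and>
         (\<forall>i. Suc i < length (snd p) \<longrightarrow> tgt (snd p ! i) = src (snd p ! Suc i)))"

definition psrc :: "('v,'a) qpath \<Rightarrow> 'v" where
  "psrc p = fst p"

definition ptgt :: "('a \<Rightarrow> 'v) \<Rightarrow> ('v,'a) qpath \<Rightarrow> 'v" where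
  "ptgt tgt p = (if snd p = [] then fst p else tgt (last (snd p)))"

definition pconcat :: "('v,'a) qpath \<Rightarrow> ('v,'a) qpath \<Rightarrow> ('v,'a) qpath" where
  "pconcat p q = (fst p, snd p @ snd q)"

text \<open>Elements of the path coalgebra kQ: finitely supported functions on paths,
  supported on valid paths (coefficient of each basis path).\<close>
definition pathcoalg :: "('a \<Rightarrow> 'v) \<Rightarrow> ('a \<Rightarrow> 'v) \<Rightarrow> (('v,'a) qpath \<Rightarrow> 'k::field) set" where
  "pathcoalg src tgt = {f. finite {p. f p \<noteq> 0} \<and> (\<forall>p. f p \<noteq> 0 \<longrightarrow> valid_path src tgt p)}"

text \<open>Comultiplication kQ \<rightarrow> kQ \<otimes> kQ; kQ \<otimes> kQ is represented by (finitely supported)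
  functions on pairs of paths, the basis of kQ \<otimes> kQ being the pairs of paths.\<close>
definition comult :: "('a \<Rightarrow> 'v) \<Rightarrow> ('a \<Rightarrow> 'v) \<Rightarrow> (('v,'a) qpath \<Rightarrow> 'k::field)
    \<Rightarrow> (('v,'a) qpath \<times> ('v,'a) qpath \<Rightarrow> 'k)" where
  "comult src tgt f = (\<lambda>(x, y). if valid_path src tgt x \<and> valid_path src tgt y \<and> ptgt tgt x = psrc y
                                then f (pconcat x y) else 0)"

definition tens :: "('b \<Rightarrow> 'k::field) \<Rightarrow> ('b \<Rightarrow> 'k) \<Rightarrow> ('b \<times> 'b \<Rightarrow> 'k)" where
  "tens a b = (\<lambda>(x, y). a x * b y)"

definition lspan :: "('b \<Rightarrow> 'k::field) set \<Rightarrow> ('b \<Rightarrow> 'k) set" where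
  "lspan S = {g. \<exists>n (c :: nat \<Rightarrow> 'k) v. (\<forall>i<n. v i \<in> S) \<and> g = (\<lambda>z. \<Sum>i<n. c i * v i z)}"

definition lsubspace :: "('b \<Rightarrow> 'k::field) set \<Rightarrow> bool" where
  "lsubspace S \<longleftrightarrow> (\<lambda>_. 0) \<in> S \<and> (\<forall>x\<in>S. \<forall>y\<in>S. (\<lambda>z. x z + y z) \<in> S)
     \<and> (\<forall>c. \<forall>x\<in>S. (\<lambda>z. c * x z) \<in> S)"

definition lin_indep :: "('b \<Rightarrow> 'k::field) set \<Rightarrow> bool" where
  "lin_indep F \<longleftrightarrow> (\<forall>G c. G \<subseteq> F \<and> finite G \<and> (\<lambda>z. \<Sum>g\<in>G. c g * g z) = (\<lambda>_. 0)
        \<longrightarrow> (\<forall>g\<in>G. c g = 0))"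

definition tensor_sub :: "('b \<Rightarrow> 'k::field) set \<Rightarrow> ('b \<Rightarrow> 'k) set \<Rightarrow> ('b \<times> 'b \<Rightarrow> 'k) set" where
  "tensor_sub A B = lspan {tens a b | a b. a \<in> A \<and> b \<in> B}"

definition subcoalgebra :: "('a \<Rightarrow> 'v) \<Rightarrow> ('a \<Rightarrow> 'v) \<Rightarrow> (('v,'a) qpath \<Rightarrow> 'k::field) set \<Rightarrow> bool" where
  "subcoalgebra src tgt C \<longleftrightarrow> C \<subseteq> pathcoalg src tgt \<and> lsubspace C
     \<and> (\<forall>x\<in>C. comult src tgt x \<in> tensor_sub C C)"

definition right_coideal :: "('a \<Rightarrow> 'v) \<Rightarrow> ('a \<Rightarrow> 'v) \<Rightarrow> (('v,'a) qpath \<Rightarrow> 'k::field) set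
    \<Rightarrow> (('v,'a) qpath \<Rightarrow> 'k) set \<Rightarrow> bool" where
  "right_coideal src tgt C I \<longleftrightarrow> I \<subseteq> C \<and> lsubspace I
     \<and> (\<forall>x\<in>I. comult src tgt x \<in> tensor_sub I C)"

definition rc_gen :: "('a \<Rightarrow> 'v) \<Rightarrow> ('a \<Rightarrow> 'v) \<Rightarrow> (('v,'a) qpath \<Rightarrow> 'k::field) set
    \<Rightarrow> (('v,'a) qpath \<Rightarrow> 'k) set \<Rightarrow> (('v,'a) qpath \<Rightarrow> 'k) set" where
  "rc_gen src tgt C S = \<Inter> {J. right_coideal src tgt C J \<and> S \<subseteq> J}"

definition generated_by :: "('a \<Rightarrow> 'v) \<Rightarrow> ('a \<Rightarrow> 'v) \<Rightarrow> (('v,'a) qpath \<Rightarrow> 'k::field) set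
    \<Rightarrow> (('v,'a) qpath \<Rightarrow> 'k) set \<Rightarrow> (('v,'a) qpath \<Rightarrow> 'k) set \<Rightarrow> bool" where
  "generated_by src tgt C S I \<longleftrightarrow> right_coideal src tgt C I \<and> S \<subseteq> I
     \<and> (\<forall>J. right_coideal src tgt C J \<and> S \<subseteq> J \<longrightarrow> I \<subseteq> J)"

definition multipaths :: "('a \<Rightarrow> 'v) \<Rightarrow> (('v,'a) qpath \<Rightarrow> 'k::field) set \<Rightarrow> (('v,'a) qpath \<Rightarrow> 'k) set" where
  "multipaths tgt C = {x \<in> C. x \<noteq> (\<lambda>_. 0) \<and>
      (\<exists>v w. \<forall>p. x p \<noteq> 0 \<longrightarrow> psrc p = v \<and> ptgt tgt p = w)}"

definition independent :: "('a \<Rightarrow> 'v) \<Rightarrow> ('a \<Rightarrow> 'v) \<Rightarrow> (('v,'a) qpath \<Rightarrow> 'k::field) set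
    \<Rightarrow> (('v,'a) qpath \<Rightarrow> 'k) set \<Rightarrow> bool" where
  "independent src tgt C F \<longleftrightarrow> F \<subseteq> multipaths tgt C \<and> lin_indep F
     \<and> (\<forall>x\<in>F. rc_gen src tgt C {x} \<inter> F = {x})"

end

theory Submission
  imports Defs
begin

lemma ls_zero: "lsubspace S \<Longrightarrow> (\<lambda>_. 0) \<in> S" by (simp add: lsubspace_def)
lemma ls_add: "lsubspace S \<Longrightarrow> x\<in>S \<Longrightarrow> y\<in>S \<Longrightarrow> (\<lambda>z. x z + y z) \<in> S"
  by (simp add: lsubspace_def)
lemma ls_scale: "lsubspace S \<Longrightarrow> x\<in>S \<Longrightarrow> (\<lambda>z. c * x z) \<in> S"
  by (simp add: lsubspace_def)

lemma ls_lincomb: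
  assumes "lsubspace S" "x\<in>S" "y\<in>S" shows "(\<lambda>z. x z - c * y z) \<in> S"
proof -
  have "(\<lambda>z. (-c) * y z) \<in> S" using assms ls_scale by blast
  hence "(\<lambda>z. x z + (-c) * y z) \<in> S" using assms ls_add[of S x "\<lambda>z. (-c) * y z"] by blast
  thus ?thesis by simp
qed

lemma ls_sum: "lsubspace S \<Longrightarrow> (\<forall>i<(n::nat). f i \<in> S) \<Longrightarrow> (\<lambda>z. \<Sum>i<n. f i z) \<in> S"
proof (induction n)
  case 0 then show ?case by (simp add: ls_zero)
next
  case (Suc n)
  have "(\<lambda>z. (\<Sum>i<n. f i z) + f n z) \<in> S"
    using Suc by (intro ls_add) auto
  thus ?case by simp
qed

lemma ls_fsum: assumes "lsubspace S" shows "finite A \<Longrightarrow> (\<forall>a\<in>A. f a \<in> S) \<Longrightarrow> (\<lambda>z. \<Sum>a\<in>A. f a z) \<in> S"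
proof (induction A rule: finite_induct)
  case empty then show ?case using assms by (simp add: ls_zero)
next
  case (insert x F)
  have "(\<lambda>z. f x z + (\<Sum>a\<in>F. f a z)) \<in> S"
    using insert assms by (intro ls_add) auto
  thus ?case using insert by simp
qed

lemma sum_split: "(\<Sum>i<n+m. f i) = (\<Sum>i<n. f i) + (\<Sum>i<m. f (n+i::nat))"
  by (induction m) (simp_all add: add.assoc)

lemma lspan_add:
  assumes "x \<in> lspan S" "y \<in> lspan S" shows "(\<lambda>z. x z + y z) \<in> lspan S"
proof -
  obtain n1 :: nat and c1 v1 where 1: "\<forall>i<n1. v1 i \<in> S" "x = (\<lambda>z. \<Sum>i<n1. c1 i * v1 i z)"
    using assms(1) unfolding lspan_def by blast
  obtain n2 :: nat and c2 v2 where 2: "\<forall>i<n2. v2 i \<in> S" "y = (\<lambda>z. \<Sum>i<n2. c2 i * v2 i z)"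
    using assms(2) unfolding lspan_def by blast
  define c where "c i = (if i < n1 then c1 i else c2 (i - n1))" for i
  define v where "v i = (if i < n1 then v1 i else v2 (i - n1))" for i
  have vS: "\<forall>i<n1+n2. v i \<in> S" using 1 2 by (auto simp: v_def)
  have "(\<lambda>z. x z + y z) = (\<lambda>z. \<Sum>i<n1+n2. c i * v i z)"
  proof
    fix z
    have a: "(\<Sum>i<n1. c i * v i z) = (\<Sum>i<n1. c1 i * v1 i z)"
      by (rule sum.cong) (auto simp: c_def v_def)
    have b: "(\<Sum>i<n2. c (n1+i) * v (n1+i) z) = (\<Sum>i<n2. c2 i * v2 i z)"
      by (rule sum.cong) (auto simp: c_def v_def)
    show "x z + y z = (\<Sum>i<n1+n2. c i * v i z)"
      unfolding sum_split[of _ n1 n2] a b using 1 2 by simp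
  qed
  thus ?thesis using vS unfolding lspan_def by blast
qed

lemma lspan_sub: "lsubspace T \<Longrightarrow> S \<subseteq> T \<Longrightarrow> lspan S \<subseteq> T"
  unfolding lspan_def by (auto intro!: ls_sum ls_scale)

lemma tensor_sub_form:
  assumes "lsubspace A" "g \<in> tensor_sub A B"
  shows "\<exists>(n::nat) a b. (\<forall>i<n. a i \<in> A \<and> b i \<in> B) \<and> g = (\<lambda>(p,q). \<Sum>i<n. a i p * b i q)"
proof -
  obtain n :: nat and c v where nv: "\<forall>i<n. v i \<in> {tens a b | a b. a \<in> A \<and> b \<in> B}"
    and g: "g = (\<lambda>z. \<Sum>i<n. c i * v i z)"
    using assms(2) unfolding tensor_sub_def lspan_def by blast
  have "\<forall>i. \<exists>a b. i < n \<longrightarrow> v i = tens a b \<and> a \<in> A \<and> b \<in> B" using nv by blast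
  then obtain fa fb where f: "\<And>i. i < n \<Longrightarrow> v i = tens (fa i) (fb i) \<and> fa i \<in> A \<and> fb i \<in> B"
    by metis
  have "g = (\<lambda>(p,q). \<Sum>i<n. (\<lambda>p. c i * fa i p) p * fb i q)"
  proof (rule ext, clarify)
    fix p q
    show "g (p,q) = (\<Sum>i<n. c i * fa i p * fb i q)"
      unfolding g by (rule sum.cong) (auto simp: f tens_def)
  qed
  moreover have "\<forall>i<n. (\<lambda>p. c i * fa i p) \<in> A \<and> fb i \<in> B"
    using f assms(1) ls_scale by blast
  ultimately show ?thesis
    by (intro exI[of _ n] exI[of _ "\<lambda>i p. c i * fa i p"] exI[of _ fb]) auto
qed

lemma tensor_sub_form_rev:
  assumes "\<forall>i<(n::nat). a i \<in> A \<and> b i \<in> B"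
  shows "(\<lambda>(p,q). \<Sum>i<n. a i p * b i q) \<in> tensor_sub A B"
proof -
  have "(\<lambda>(p,q). \<Sum>i<n. a i p * b i q) = (\<lambda>z. \<Sum>i<n. 1 * (\<lambda>i. tens (a i) (b i)) i z)"
    by (auto simp: tens_def)
  moreover have "\<forall>i<n. (\<lambda>i. tens (a i) (b i)) i \<in> {tens a b | a b. a \<in> A \<and> b \<in> B}"
    using assms by blast
  ultimately show ?thesis unfolding tensor_sub_def lspan_def
    by (intro CollectI exI[of _ n] exI[of _ "\<lambda>_. 1"] exI[of _ "\<lambda>i. tens (a i) (b i)"] conjI) auto
qed

lemma tensor_sub_gen: "a \<in> A \<Longrightarrow> b \<in> B \<Longrightarrow> tens a b \<in> tensor_sub A B"
  using tensor_sub_form_rev[of 1 "\<lambda>_. a" A "\<lambda>_. b" B] by (simp add: tens_def lessThan_Suc)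

lemma tensor_sub_add: "x \<in> tensor_sub A B \<Longrightarrow> y \<in> tensor_sub A B \<Longrightarrow> (\<lambda>z. x z + y z) \<in> tensor_sub A B"
  unfolding tensor_sub_def by (rule lspan_add)

lemma slice2:
  assumes "lsubspace A" "g \<in> tensor_sub A B" shows "(\<lambda>p. g (p,q)) \<in> A"
proof -
  obtain n :: nat and a b where ab: "\<forall>i<n. a i \<in> A \<and> b i \<in> B" "g = (\<lambda>(p,q). \<Sum>i<n. a i p * b i q)"
    using tensor_sub_form[OF assms] by blast
  have "(\<lambda>p. \<Sum>i<n. (\<lambda>p. b i q * a i p) p) \<in> A"
    using ab(1) assms(1) by (intro ls_sum) (auto intro: ls_scale)
  thus ?thesis using ab(2) by (simp add: mult.commute)
qed

lemma slice1:
  assumes "lsubspace A" "lsubspace B" "g \<in> tensor_sub A B" shows "(\<lambda>q. g (p,q)) \<in> B"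
proof -
  obtain n :: nat and a b where ab: "\<forall>i<n. a i \<in> A \<and> b i \<in> B" "g = (\<lambda>(p,q). \<Sum>i<n. a i p * b i q)"
    using tensor_sub_form[OF assms(1,3)] by blast
  have "(\<lambda>q. \<Sum>i<n. (\<lambda>q. a i p * b i q) q) \<in> B"
    using ab(1) assms(2) by (intro ls_sum) (auto intro: ls_scale)
  thus ?thesis using ab(2) by simp
qed

lemma keyL:
  assumes A: "lsubspace A" and D: "lsubspace D"
  shows "(\<forall>i<(n::nat). b i \<in> D) \<Longrightarrow> g = (\<lambda>(p,q). \<Sum>i<n. a i p * b i q)
    \<Longrightarrow> (\<forall>q. (\<lambda>p. g (p,q)) \<in> A) \<Longrightarrow> g \<in> tensor_sub A D"
proof (induction n arbitrary: g a b)
  case 0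
  show ?case unfolding "0.prems"(2) by (rule tensor_sub_form_rev) simp
next
  case (Suc n)
  note hb = Suc.prems(1) and hg = Suc.prems(2) and hs = Suc.prems(3)
  show ?case
  proof (cases "\<forall>q. b n q = 0")
    case True
    have "g = (\<lambda>(p,q). \<Sum>i<n. a i p * b i q)" using hg True by auto
    thus ?thesis using Suc.IH[of b g a] hb hs by auto
  next
    case False
    then obtain q0 where q0: "b n q0 \<noteq> 0" by blast
    define \<beta> where "\<beta> = b n q0"
    define s where "s = (\<lambda>p. g (p,q0))"
    define b' where "b' i = (\<lambda>q. b i q - (b i q0 / \<beta>) * b n q)" for i
    define g' where "g' = (\<lambda>(p,q). \<Sum>i<n. a i p * b' i q)"
    have sA: "s \<in> A" using hs s_def by auto
    have b'D: "\<forall>i<n. b' i \<in> D"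
    proof (intro allI impI)
      fix i assume "i < n"
      thus "b' i \<in> D" using hb unfolding b'_def by (intro ls_lincomb[OF D]) auto
    qed
    have sp: "s p = (\<Sum>i<n. a i p * b i q0) + a n p * \<beta>" for p
      using hg by (simp add: s_def \<beta>_def)
    have g'p: "g' (p,q) = (\<Sum>i<n. a i p * b i q) - (\<Sum>i<n. a i p * b i q0) * (b n q / \<beta>)" for p q
    proof -
      have "g' (p,q) = (\<Sum>i<n. a i p * b i q - a i p * b i q0 * (b n q / \<beta>))"
        unfolding g'_def b'_def by (simp add: algebra_simps)
      also have "\<dots> = (\<Sum>i<n. a i p * b i q) - (\<Sum>i<n. a i p * b i q0) * (b n q / \<beta>)"
        by (simp only: sum_subtractf sum_distrib_right)
      finally show ?thesis .
    qed
    have geq: "g = (\<lambda>z. g' z + tens s (\<lambda>q. b n q / \<beta>) z)"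
    proof (rule ext, clarify)
      fix p q
      have "g (p,q) = (\<Sum>i<n. a i p * b i q) + a n p * b n q" using hg by simp
      moreover have "\<beta> \<noteq> 0" using q0 \<beta>_def by simp
      ultimately show "g (p,q) = g' (p,q) + tens s (\<lambda>q. b n q / \<beta>) (p,q)"
        unfolding g'p tens_def sp by (simp add: field_simps)
    qed
    have slices: "\<forall>q. (\<lambda>p. g' (p,q)) \<in> A"
    proof
      fix q
      have "(\<lambda>p. g (p,q) - (b n q / \<beta>) * s p) \<in> A"
        using hs sA by (intro ls_lincomb[OF A]) auto
      moreover have "(\<lambda>p. g (p,q) - (b n q / \<beta>) * s p) = (\<lambda>p. g' (p,q))"
      proof
        fix p
        have "g (p,q) = (\<Sum>i<n. a i p * b i q) + a n p * b n q" using hg by simp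
        moreover have "\<beta> \<noteq> 0" using q0 \<beta>_def by simp
        ultimately show "g (p,q) - (b n q / \<beta>) * s p = g' (p,q)"
          unfolding g'p sp by (simp add: field_simps)
      qed
      ultimately show "(\<lambda>p. g' (p,q)) \<in> A" by simp
    qed
    have "g' \<in> tensor_sub A D" using Suc.IH[OF b'D g'_def slices] .
    moreover have "(\<lambda>q. b n q / \<beta>) \<in> D"
    proof -
      have "(\<lambda>q. (1/\<beta>) * b n q) \<in> D" using hb by (intro ls_scale[OF D]) auto
      thus ?thesis by simp
    qed
    hence "tens s (\<lambda>q. b n q / \<beta>) \<in> tensor_sub A D" using sA by (rule tensor_sub_gen[rotated])
    ultimately show ?thesis unfolding geq by (rule tensor_sub_add)
  qed
qed


lemma coideal_C:
  assumes "subcoalgebra src tgt C" shows "right_coideal src tgt C C"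
  using assms unfolding subcoalgebra_def right_coideal_def by simp

lemma rc_gen_mem: "x \<in> rc_gen src tgt C M \<longleftrightarrow> (\<forall>J. right_coideal src tgt C J \<longrightarrow> M \<subseteq> J \<longrightarrow> x \<in> J)"
  unfolding rc_gen_def by blast

lemma rc_ls: "right_coideal src tgt C J \<Longrightarrow> lsubspace J"
  unfolding right_coideal_def by simp
lemma rc_sub: "right_coideal src tgt C J \<Longrightarrow> J \<subseteq> C"
  unfolding right_coideal_def by simp
lemma rc_cm: "right_coideal src tgt C J \<Longrightarrow> x \<in> J \<Longrightarrow> comult src tgt x \<in> tensor_sub J C"
  unfolding right_coideal_def by simp

lemma rc_gen_coideal:
  assumes sc: "subcoalgebra src tgt C" and MC: "M \<subseteq> C"
  shows "right_coideal src tgt C (rc_gen src tgt C M)"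
proof -
  have CF: "right_coideal src tgt C C" using coideal_C[OF sc] .
  have lsC: "lsubspace C" using sc unfolding subcoalgebra_def by simp
  have RC: "rc_gen src tgt C M \<subseteq> C"
  proof
    fix x assume "x \<in> rc_gen src tgt C M"
    thus "x \<in> C" using CF MC unfolding rc_gen_mem by simp
  qed
  have lsR: "lsubspace (rc_gen src tgt C M)"
    unfolding lsubspace_def
  proof (intro conjI ballI allI)
    show "(\<lambda>_. 0) \<in> rc_gen src tgt C M" unfolding rc_gen_mem using rc_ls ls_zero by metis
  next
    fix x y assume "x \<in> rc_gen src tgt C M" "y \<in> rc_gen src tgt C M"
    thus "(\<lambda>z. x z + y z) \<in> rc_gen src tgt C M" unfolding rc_gen_mem using rc_ls ls_add by metis
  next
    fix c x assume "x \<in> rc_gen src tgt C M"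
    thus "(\<lambda>z. c * x z) \<in> rc_gen src tgt C M" unfolding rc_gen_mem using rc_ls ls_scale by metis
  qed
  have "comult src tgt x \<in> tensor_sub (rc_gen src tgt C M) C" if xR: "x \<in> rc_gen src tgt C M" for x
  proof -
    have "x \<in> C" using xR RC by blast
    hence "comult src tgt x \<in> tensor_sub C C" using sc unfolding subcoalgebra_def by simp
    then obtain n :: nat and a b where ab: "\<forall>i<n. a i \<in> C \<and> b i \<in> C"
      "comult src tgt x = (\<lambda>(p,q). \<Sum>i<n. a i p * b i q)"
      using tensor_sub_form[OF lsC] by blast
    have bC: "\<forall>i<n. b i \<in> C" using ab(1) by simp
    have sl: "\<forall>q. (\<lambda>p. comult src tgt x (p,q)) \<in> rc_gen src tgt C M"
    proof
      fix q
      show "(\<lambda>p. comult src tgt x (p,q)) \<in> rc_gen src tgt C M"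
        unfolding rc_gen_mem
      proof (intro allI impI)
        fix J assume J: "right_coideal src tgt C J" "M \<subseteq> J"
        hence "x \<in> J" using xR unfolding rc_gen_mem by simp
        hence "comult src tgt x \<in> tensor_sub J C" by (rule rc_cm[OF J(1)])
        thus "(\<lambda>p. comult src tgt x (p,q)) \<in> J" using slice2 rc_ls[OF J(1)] by metis
      qed
    qed
    show ?thesis by (rule keyL[OF lsR lsC bC ab(2) sl])
  qed
  thus ?thesis unfolding right_coideal_def using RC lsR by simp
qed

definition srestr :: "'v \<Rightarrow> (('v,'a) qpath \<Rightarrow> 'k::field) \<Rightarrow> (('v,'a) qpath \<Rightarrow> 'k)" where
  "srestr v x = (\<lambda>q. if psrc q = v then x q else 0)"
definition trestr :: "('a \<Rightarrow> 'v) \<Rightarrow> 'v \<Rightarrow> (('v,'a) qpath \<Rightarrow> 'k::field) \<Rightarrow> (('v,'a) qpath \<Rightarrow> 'k)" where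
  "trestr tgt w x = (\<lambda>p. if ptgt tgt p = w then x p else 0)"

lemma srestr_in:
  assumes sc: "subcoalgebra src tgt C" and x: "x \<in> C" shows "srestr v x \<in> C"
proof -
  have lsC: "lsubspace C" and pc: "C \<subseteq> pathcoalg src tgt"
    and cm: "comult src tgt x \<in> tensor_sub C C" using sc x unfolding subcoalgebra_def by auto
  have val: "x q \<noteq> 0 \<Longrightarrow> valid_path src tgt q" for q using pc x unfolding pathcoalg_def by blast
  have "(\<lambda>q. comult src tgt x ((v,[]),q)) \<in> C" by (rule slice1[OF lsC lsC cm])
  moreover have "(\<lambda>q. comult src tgt x ((v,[]),q)) = srestr v x"
  proof
    fix q
    show "comult src tgt x ((v,[]),q) = srestr v x q"
      using val[of q] unfolding comult_def srestr_def
      by (cases q) (auto simp: valid_path_def ptgt_def psrc_def pconcat_def)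
  qed
  ultimately show ?thesis by simp
qed

lemma trestr_in:
  assumes sc: "subcoalgebra src tgt C" and x: "x \<in> C" shows "trestr tgt w x \<in> C"
proof -
  have lsC: "lsubspace C" and pc: "C \<subseteq> pathcoalg src tgt"
    and cm: "comult src tgt x \<in> tensor_sub C C" using sc x unfolding subcoalgebra_def by auto
  have val: "x q \<noteq> 0 \<Longrightarrow> valid_path src tgt q" for q using pc x unfolding pathcoalg_def by blast
  have "(\<lambda>p. comult src tgt x (p,(w,[]))) \<in> C" by (rule slice2[OF lsC cm])
  moreover have "(\<lambda>p. comult src tgt x (p,(w,[]))) = trestr tgt w x"
  proof
    fix q
    show "comult src tgt x (q,(w,[])) = trestr tgt w x q"
      using val[of q] unfolding comult_def trestr_def
      by (cases q) (auto simp: valid_path_def ptgt_def psrc_def pconcat_def)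
  qed
  ultimately show ?thesis by simp
qed

lemma rc_gen_remove:
  assumes "y \<in> F" "\<And>J. right_coideal src tgt C J \<Longrightarrow> F - {y} \<subseteq> J \<Longrightarrow> y \<in> J"
  shows "rc_gen src tgt C (F - {y}) = rc_gen src tgt C F"
proof -
  have "{J. right_coideal src tgt C J \<and> F - {y} \<subseteq> J} = {J. right_coideal src tgt C J \<and> F \<subseteq> J}"
    using assms by blast
  thus ?thesis unfolding rc_gen_def by simp
qed

theorem corollary4p21:
  fixes src tgt :: "'a \<Rightarrow> 'v"
    and C I :: "(('v,'a) qpath \<Rightarrow> 'k::field) set"
  assumes "subcoalgebra src tgt C"
    and "\<exists>S. finite S \<and> generated_by src tgt C S I"
  shows "\<exists>I' F. right_coideal src tgt C I' \<and> I \<subseteq> I' \<and> finite F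
           \<and> independent src tgt C F \<and> generated_by src tgt C F I'"
proof -
  note sc = assms(1)
  obtain S where fS: "finite S" and gS: "generated_by src tgt C S I" using assms(2) by blast
  have SC: "S \<subseteq> C" using gS unfolding generated_by_def right_coideal_def by blast
  have pc: "C \<subseteq> pathcoalg src tgt" using sc unfolding subcoalgebra_def by blast
  define P where "P s = (\<lambda>p. (psrc p, ptgt tgt p)) ` {p. s p \<noteq> 0}" for s :: "('v,'a) qpath \<Rightarrow> 'k"
  define rs where "rs s vw = trestr tgt (snd vw) (srestr (fst vw) s)" for s :: "('v,'a) qpath \<Rightarrow> 'k" and vw :: "'v \<times> 'v"
  define M where "M = (\<lambda>(s,vw). rs s vw) ` (SIGMA s:S. P s) - {\<lambda>_. 0}"
  have fP: "finite (P s)" if "s \<in> S" for s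
    using that SC pc unfolding P_def pathcoalg_def by auto
  have fM: "finite M" unfolding M_def using fS fP by auto
  have rsC: "rs s vw \<in> C" if "s \<in> C" for s vw
    unfolding rs_def by (intro trestr_in[OF sc] srestr_in[OF sc] that)
  have rs_eq: "rs s vw z = (if (psrc z, ptgt tgt z) = vw then s z else 0)" for s vw z
    unfolding rs_def trestr_def srestr_def by (cases vw) auto
  have MC: "M \<subseteq> C" unfolding M_def using rsC SC by auto
  have Mmp: "M \<subseteq> multipaths tgt C"
  proof
    fix x assume xM: "x \<in> M"
    then obtain s vw where x: "x = rs s vw" "x \<noteq> (\<lambda>_. 0)" unfolding M_def by auto
    have "\<forall>p. x p \<noteq> 0 \<longrightarrow> psrc p = fst vw \<and> ptgt tgt p = snd vw"
      using x(1) rs_eq by (cases vw) auto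
    thus "x \<in> multipaths tgt C" unfolding multipaths_def using xM MC x(2) by blast
  qed
  have decomp: "s = (\<lambda>z. \<Sum>vw\<in>P s. rs s vw z)" if sS: "s \<in> S" for s
  proof
    fix z
    have "(\<Sum>vw\<in>P s. rs s vw z) = (\<Sum>vw\<in>P s. if (psrc z, ptgt tgt z) = vw then s z else 0)"
      using rs_eq by simp
    also have "\<dots> = (if (psrc z, ptgt tgt z) \<in> P s then s z else 0)" by (rule sum.delta'[OF fP[OF sS]])
    also have "\<dots> = s z" unfolding P_def by auto
    finally show "s z = (\<Sum>vw\<in>P s. rs s vw z)" by simp
  qed
  have IM: "I \<subseteq> rc_gen src tgt C M"
  proof -
    have "S \<subseteq> rc_gen src tgt C M"
    proof
      fix s assume sS: "s \<in> S"
      show "s \<in> rc_gen src tgt C M" unfolding rc_gen_def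
      proof
        fix J assume J: "J \<in> {J. right_coideal src tgt C J \<and> M \<subseteq> J}"
        hence lsJ: "lsubspace J" unfolding right_coideal_def by blast
        have "\<forall>vw\<in>P s. rs s vw \<in> J"
        proof
          fix vw assume "vw \<in> P s"
          show "rs s vw \<in> J"
          proof (cases "rs s vw = (\<lambda>_. 0)")
            case True thus ?thesis using ls_zero[OF lsJ] by simp
          next
            case False
            hence "rs s vw \<in> M" unfolding M_def using sS \<open>vw \<in> P s\<close> by force
            thus ?thesis using J by blast
          qed
        qed
        hence "(\<lambda>z. \<Sum>vw\<in>P s. rs s vw z) \<in> J" using ls_fsum[OF lsJ] fP[OF sS] by blast
        thus "s \<in> J" using decomp[OF sS] by simp
      qed
    qed
    thus ?thesis using gS rc_gen_coideal[OF sc MC] unfolding generated_by_def by blast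
  qed
  define Pr where "Pr F = (finite F \<and> F \<subseteq> multipaths tgt C \<and> rc_gen src tgt C F = rc_gen src tgt C M)"
    for F
  have "Pr M" unfolding Pr_def using fM Mmp by blast
  then obtain F where PF: "Pr F" and minF: "\<And>F'. Pr F' \<Longrightarrow> card F \<le> card F'"
    using ex_has_least_nat[of Pr M card] by blast
  have fF: "finite F" and Fmp: "F \<subseteq> multipaths tgt C" and FR: "rc_gen src tgt C F = rc_gen src tgt C M"
    using PF unfolding Pr_def by auto
  have FC: "F \<subseteq> C" using Fmp unfolding multipaths_def by blast
  have noremove: False if "y \<in> F" "\<And>J. right_coideal src tgt C J \<Longrightarrow> F - {y} \<subseteq> J \<Longrightarrow> y \<in> J" for y
  proof -
    have "Pr (F - {y})" unfolding Pr_def using fF Fmp FR rc_gen_remove[of y F src tgt C, OF that] by auto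
    hence "card F \<le> card (F - {y})" by (rule minF)
    moreover have "card (F - {y}) < card F" using that(1) fF by (metis card_Diff1_less)
    ultimately show False by simp
  qed
  have ind1: "rc_gen src tgt C {x} \<inter> F = {x}" if xF: "x \<in> F" for x
  proof -
    have "x \<in> rc_gen src tgt C {x}" unfolding rc_gen_def by blast
    moreover have "y = x" if "y \<in> rc_gen src tgt C {x}" "y \<in> F" for y
    proof (rule ccontr)
      assume yx: "y \<noteq> x"
      have "y \<in> J" if J: "right_coideal src tgt C J" "F - {y} \<subseteq> J" for J
      proof -
        have "x \<in> J" using J xF yx by blast
        thus "y \<in> J" using \<open>y \<in> rc_gen src tgt C {x}\<close> J unfolding rc_gen_def by blast
      qed
      thus False using noremove[of y] \<open>y \<in> F\<close> by blast
    qed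
    ultimately show ?thesis using xF by blast
  qed
  have ind2: "lin_indep F" unfolding lin_indep_def
  proof (intro allI impI ballI)
    fix G c g0
    assume H: "G \<subseteq> F \<and> finite G \<and> (\<lambda>z. \<Sum>g\<in>G. c g * g z) = (\<lambda>_. 0)" and g0: "g0 \<in> G"
    show "c g0 = 0"
    proof (rule ccontr)
      assume c0: "c g0 \<noteq> 0"
      have "g0 \<in> J" if J: "right_coideal src tgt C J" "F - {g0} \<subseteq> J" for J
      proof -
        have lsJ: "lsubspace J" using J unfolding right_coideal_def by blast
        have "(\<lambda>z. \<Sum>g\<in>G - {g0}. (\<lambda>z. (- (c g / c g0)) * g z) z) \<in> J"
        proof (rule ls_fsum[OF lsJ])
          show "finite (G - {g0})" using H by simp
          show "\<forall>g\<in>G - {g0}. (\<lambda>z. (- (c g / c g0)) * g z) \<in> J"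
          proof
            fix g assume "g \<in> G - {g0}"
            hence "g \<in> J" using H J(2) by blast
            thus "(\<lambda>z. (- (c g / c g0)) * g z) \<in> J" by (rule ls_scale[OF lsJ])
          qed
        qed
        moreover have "(\<lambda>z. \<Sum>g\<in>G - {g0}. (\<lambda>z. (- (c g / c g0)) * g z) z) = g0"
        proof
          fix z
          have "(\<Sum>g\<in>G. c g * g z) = 0" using H by meson
          hence "c g0 * g0 z + (\<Sum>g\<in>G - {g0}. c g * g z) = 0"
            using H g0 by (simp add: sum.remove)
          hence "g0 z = - (\<Sum>g\<in>G - {g0}. c g * g z) / c g0" using c0 by (simp add: field_simps eq_neg_iff_add_eq_0)
          also have "\<dots> = (\<Sum>g\<in>G - {g0}. (- (c g / c g0)) * g z)"
            by (simp add: sum_divide_distrib sum_negf)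
          finally show "(\<Sum>g\<in>G - {g0}. (\<lambda>z. (- (c g / c g0)) * g z) z) = g0 z" by simp
        qed
        ultimately show ?thesis by simp
      qed
      thus False using noremove[of g0] H g0 by blast
    qed
  qed
  have indep: "independent src tgt C F" unfolding independent_def using Fmp ind1 ind2 by blast
  have cI': "right_coideal src tgt C (rc_gen src tgt C F)" using rc_gen_coideal[OF sc FC] .
  have gen: "generated_by src tgt C F (rc_gen src tgt C F)"
    unfolding generated_by_def using cI' unfolding rc_gen_def by blast
  show ?thesis using cI' IM FR fF indep gen by auto
qed

end
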